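(* Let $\kappa_1,\kappa_2,\kappa_5,\kappa_6,\kappa_7,\kappa_8,\theta,\mu>0$ and consider the ODE system, with positive initial values, $c'=\kappa_6c_p-\kappa_5c$, $c_p'=\kappa_5c+\kappa_8c_{pp}-(\kappa_6+\kappa_7)c_p$, $c_{pp}'=\kappa_7c_p-\kappa_8c_{pp}$, $(x^* )'=\kappa_2c_{pp}m-\kappa_1x^*$, $z'=z(\theta m-\mu)$, where $m(t)=\dfrac{\kappa_1x^*(t)+\mu z(t)}{\kappa_2c_{pp}(t)+\theta z(t)}$. Let $M=x^*(0)+z(0)$, $L=c(0)+c_p(0)+c_{pp}(0)$, and $\bar c_{pp}=\dfrac{\kappa_5\kappa_6\kappa_7\kappa_8L}{\kappa_6^2\kappa_8^2+\kappa_5\kappa_6\kappa_8^2+\kappa_5\kappa_6\kappa_7\kappa_8}$. If $\theta\kappa_1M>\mu\kappa_2\bar c_{pp}$, then $z(t)\to\dfrac{\theta\kappa_1M-\mu\kappa_2\bar c_{pp}}{\theta\kappa_1}$ as $t\to\infty$.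
   Context: This is the deterministic part of a hybrid approximation of a dimer-catalyzer network controlled by a basic ACR controller; $m(t)$ represents the mean of the stochastically modeled target species. (The full system also contains a variable $x_1$ with $x_1'=0$, which does not affect the equations above.) *)

theory Defs
  imports "HOL-Analysis.Analysis"
begin

end

theory Submission
  imports Defs "HOL-Real_Asymp.Real_Asymp"
begin
lemma deriv_cont0:
  assumes "\<And>t. t \<ge> 0 \<Longrightarrow> (f has_real_derivative f' t) (at t within {0..})"
  shows "continuous_on {0..} f"
  using assms by (meson DERIV_continuous atLeast_iff continuous_on_eq_continuous_within)

lemma deriv_at_pos:
  assumes "(f has_real_derivative D) (at t within {0..})" "t > 0"
  shows "(f has_real_derivative D) (at t)"
proof -
  have "t \<in> interior {0..}" using assms(2) by simp
  then show ?thesis using assms(1) at_within_interior by metis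
qed

lemma intfac:
  fixes f f' :: "real \<Rightarrow> real"
  assumes "0 \<le> a" "a \<le> b"
   and d: "\<And>t. t \<ge> 0 \<Longrightarrow> (f has_real_derivative f' t) (at t within {0..})"
   and n: "\<And>t. a < t \<Longrightarrow> t < b \<Longrightarrow> f' t + k * f t \<ge> 0"
  shows "f a * exp (k*a) \<le> f b * exp (k*b)"
proof -
  let ?h = "\<lambda>t. f t * exp (k*t)"
  have c: "continuous_on {a..b} f"
    using deriv_cont0[OF d] continuous_on_subset assms(1) by fastforce
  have ch: "continuous_on {a..b} ?h"
    by (intro continuous_intros c)
  show ?thesis
  proof (rule DERIV_nonneg_imp_increasing_open[OF assms(2) _ ch])
    fix x assume x: "a < x" "x < b"
    have dx: "(f has_real_derivative f' x) (at x)"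
      using x assms(1) by (intro deriv_at_pos[OF d[of x]]) auto
    have e: "((\<lambda>t. exp (k*t)) has_real_derivative exp (k*x) * k) (at x)"
      by (auto intro!: derivative_eq_intros)
    have "(?h has_real_derivative (f' x * exp (k*x) + exp (k*x) * k * f x)) (at x)"
      by (rule DERIV_mult[OF dx e])
    moreover have "f' x * exp (k*x) + exp (k*x) * k * f x = (f' x + k * f x) * exp (k*x)"
      by (simp add: algebra_simps)
    moreover have "(f' x + k * f x) * exp (k*x) \<ge> 0" using n[OF x] by simp
    ultimately show "\<exists>y. (?h has_real_derivative y) (at x) \<and> 0 \<le> y" by metis
  qed
qed

lemma first_cross:
  fixes g :: "real \<Rightarrow> real"
  assumes c: "continuous_on {0..} g" and g0: "g 0 > 0"
    and step: "\<And>T. T > 0 \<Longrightarrow> (\<forall>t\<in>{0..<T}. g t > 0) \<Longrightarrow> g T > 0"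
    and s: "s \<ge> 0"
  shows "g s > 0"
proof (rule ccontr)
  assume ns: "\<not> g s > 0"
  define Z where "Z = {0..s} \<inter> g -` {..0}"
  have cl: "closed Z" unfolding Z_def
    by (rule continuous_closed_preimage) (use continuous_on_subset[OF c] in auto)
  have ne: "Z \<noteq> {}" using ns s unfolding Z_def by auto
  have bb: "bdd_below Z" unfolding Z_def by (auto intro: bdd_belowI[where m=0])
  define r where "r = Inf Z"
  have rZ: "r \<in> Z" using closed_contains_Inf[OF ne bb cl] r_def by simp
  then have r0: "r \<ge> 0" "g r \<le> 0" "r \<le> s" unfolding Z_def by auto
  have "r \<noteq> 0" using r0 g0 by auto
  then have rp: "r > 0" using r0 by simp
  have "\<forall>t\<in>{0..<r}. g t > 0"
  proof
    fix t assume t: "t \<in> {0..<r}"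
    show "g t > 0"
    proof (rule ccontr)
      assume "\<not> g t > 0"
      then have "t \<in> Z" using t r0 unfolding Z_def by auto
      then have "r \<le> t" unfolding r_def using bb by (simp add: cInf_lower)
      then show False using t by simp
    qed
  qed
  then have "g r > 0" using step rp by blast
  then show False using r0 by simp
qed

lemma barrier:
  fixes g g' :: "real \<Rightarrow> real"
  assumes a: "a \<ge> 0" and ga: "g a \<ge> 0"
    and d: "\<And>t. t \<ge> 0 \<Longrightarrow> (g has_real_derivative g' t) (at t within {0..})"
    and n: "\<And>t. t > a \<Longrightarrow> g t < 0 \<Longrightarrow> g' t \<ge> 0"
    and s: "s \<ge> a"
  shows "g s \<ge> 0"
proof (rule ccontr)
  assume ns: "\<not> g s \<ge> 0"
  have c: "continuous_on {0..} g" using deriv_cont0[OF d] .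
  define Z where "Z = {a..s} \<inter> g -` {0..}"
  have cl: "closed Z" unfolding Z_def
    by (rule continuous_closed_preimage) (use continuous_on_subset[OF c] a in auto)
  have ne: "Z \<noteq> {}" using ga s unfolding Z_def by auto
  have bb: "bdd_above Z" unfolding Z_def by (auto intro: bdd_aboveI[where M=s])
  define r where "r = Sup Z"
  have rZ: "r \<in> Z" using closed_contains_Sup[OF ne bb cl] r_def by simp
  then have r0: "r \<ge> a" "g r \<ge> 0" "r \<le> s" unfolding Z_def by auto
  have neg: "g t < 0" if t: "r < t" "t \<le> s" for t
  proof (rule ccontr)
    assume "\<not> g t < 0"
    then have "t \<in> Z" using t r0 unfolding Z_def by auto
    then have "t \<le> r" unfolding r_def using bb by (simp add: cSup_upper)
    then show False using t by simp
  qed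
  have "g r * exp (0 * r) \<le> g s * exp (0 * s)"
    by (rule intfac[where f'=g']) (use r0 a d n neg in auto)
  then show False using r0 ns by simp
qed

theorem mainTheorem6:
  fixes k1 k2 k5 k6 k7 k8 \<theta> \<mu> :: real
    and c cp cpp xs z :: "real \<Rightarrow> real"
  assumes pos: "k1 > 0" "k2 > 0" "k5 > 0" "k6 > 0" "k7 > 0" "k8 > 0" "\<theta> > 0" "\<mu> > 0"
    and init: "c 0 > 0" "cp 0 > 0" "cpp 0 > 0" "xs 0 > 0" "z 0 > 0"
    and m_def: "\<And>t. m t = (k1 * xs t + \<mu> * z t) / (k2 * cpp t + \<theta> * z t)"
    and ode_c: "\<And>t. t \<ge> 0 \<Longrightarrow>
        (c has_real_derivative (k6 * cp t - k5 * c t)) (at t within {0..})"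
    and ode_cp: "\<And>t. t \<ge> 0 \<Longrightarrow>
        (cp has_real_derivative (k5 * c t + k8 * cpp t - (k6 + k7) * cp t)) (at t within {0..})"
    and ode_cpp: "\<And>t. t \<ge> 0 \<Longrightarrow>
        (cpp has_real_derivative (k7 * cp t - k8 * cpp t)) (at t within {0..})"
    and ode_xs: "\<And>t. t \<ge> 0 \<Longrightarrow>
        (xs has_real_derivative (k2 * cpp t * m t - k1 * xs t)) (at t within {0..})"
    and ode_z: "\<And>t. t \<ge> 0 \<Longrightarrow>
        (z has_real_derivative (z t * (\<theta> * m t - \<mu>))) (at t within {0..})"
    and M_def: "M = xs 0 + z 0"
    and L_def: "L = c 0 + cp 0 + cpp 0"
    and cbar_def: "cbar = k5 * k6 * k7 * k8 * L /
        (k6\<^sup>2 * k8\<^sup>2 + k5 * k6 * k8\<^sup>2 + k5 * k6 * k7 * k8)"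
    and hyp: "\<theta> * k1 * M > \<mu> * k2 * cbar"
  shows "(z \<longlongrightarrow> (\<theta> * k1 * M - \<mu> * k2 * cbar) / (\<theta> * k1)) at_top"
proof -
  note kp = pos
  define D where "D t = k2 * cpp t + \<theta> * z t" for t
  have Lc: "c t + cp t + cpp t = L" if "t \<ge> 0" for t
  proof -
    have "\<exists>C. \<forall>x\<in>{0::real..}. c x + cp x + cpp x = C"
    proof (rule has_field_derivative_zero_constant)
      fix x :: real assume "x \<in> {0..}"
      then have x: "x \<ge> 0" by simp
      have "((\<lambda>t. c t + cp t + cpp t) has_real_derivative
          ((k6 * cp x - k5 * c x) + (k5 * c x + k8 * cpp x - (k6 + k7) * cp x) + (k7 * cp x - k8 * cpp x)))
          (at x within {0..})"
        by (intro DERIV_add ode_c ode_cp ode_cpp x)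
      moreover have "(k6 * cp x - k5 * c x) + (k5 * c x + k8 * cpp x - (k6 + k7) * cp x) + (k7 * cp x - k8 * cpp x) = 0"
        by (simp add: algebra_simps)
      ultimately show "((\<lambda>t. c t + cp t + cpp t) has_real_derivative 0) (at x within {0..})" by simp
    qed simp
    then obtain C where C: "\<forall>x\<in>{0::real..}. c x + cp x + cpp x = C" by blast
    then show ?thesis using that L_def by auto
  qed
  define g where "g t = min (c t) (min (cp t) (min (cpp t) (min (xs t) (z t))))" for t
  have cc: "continuous_on {0..} c" by (rule deriv_cont0[OF ode_c])
  have ccp: "continuous_on {0..} cp" by (rule deriv_cont0[OF ode_cp])
  have ccpp: "continuous_on {0..} cpp" by (rule deriv_cont0[OF ode_cpp])
  have cxs: "continuous_on {0..} xs" by (rule deriv_cont0[OF ode_xs])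
  have cz: "continuous_on {0..} z" by (rule deriv_cont0[OF ode_z])
  have cg: "continuous_on {0..} g" unfolding g_def
    by (intro continuous_on_min cc ccp ccpp cxs cz)
  have g0: "g 0 > 0" using init unfolding g_def by simp
  have gstep: "g T > 0" if T: "T > 0" and hT: "\<forall>t\<in>{0..<T}. g t > 0" for T
  proof -
    have P: "c t > 0 \<and> cp t > 0 \<and> cpp t > 0 \<and> xs t > 0 \<and> z t > 0" if "0 \<le> t" "t < T" for t
      using hT that unfolding g_def by auto
    have mpos: "m t > 0" if "0 \<le> t" "t < T" for t
    proof -
      have "k1 * xs t + \<mu> * z t > 0" using P[OF that] kp by (simp add: add_pos_pos)
      moreover have "k2 * cpp t + \<theta> * z t > 0" using P[OF that] kp by (simp add: add_pos_pos)
      ultimately show ?thesis using m_def by simp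
    qed
    have i1: "c 0 * exp (k5 * 0) \<le> c T * exp (k5 * T)"
    proof (rule intfac[OF _ _ ode_c])
      fix t assume "0 < t" "t < T" then have "cp t > 0" using P[of t] by auto
      then show "0 \<le> k6 * cp t - k5 * c t + k5 * c t" using kp by simp
    qed (use T in auto)
    have i2: "cp 0 * exp ((k6+k7) * 0) \<le> cp T * exp ((k6+k7) * T)"
    proof (rule intfac[OF _ _ ode_cp])
      fix t assume "0 < t" "t < T" then have "c t > 0" "cpp t > 0" using P[of t] by auto
      then show "0 \<le> k5 * c t + k8 * cpp t - (k6 + k7) * cp t + (k6 + k7) * cp t" using kp by simp
    qed (use T in auto)
    have i3: "cpp 0 * exp (k8 * 0) \<le> cpp T * exp (k8 * T)"
    proof (rule intfac[OF _ _ ode_cpp])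
      fix t assume "0 < t" "t < T" then have "cp t > 0" using P[of t] by auto
      then show "0 \<le> k7 * cp t - k8 * cpp t + k8 * cpp t" using kp by simp
    qed (use T in auto)
    have i4: "xs 0 * exp (k1 * 0) \<le> xs T * exp (k1 * T)"
    proof (rule intfac[OF _ _ ode_xs])
      fix t assume "0 < t" "t < T" then have "cpp t > 0" "m t > 0" using P[of t] mpos[of t] by auto
      then show "0 \<le> k2 * cpp t * m t - k1 * xs t + k1 * xs t" using kp by simp
    qed (use T in auto)
    have i5: "z 0 * exp (\<mu> * 0) \<le> z T * exp (\<mu> * T)"
    proof (rule intfac[OF _ _ ode_z])
      fix t assume "0 < t" "t < T" then have "z t > 0" "m t > 0" using P[of t] mpos[of t] by auto
      then show "0 \<le> z t * (\<theta> * m t - \<mu>) + \<mu> * z t" using kp by (simp add: algebra_simps)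
    qed (use T in auto)
    have "c T > 0"
    proof -
      have "0 < c T * exp (k5 * T)" using i1 init(1) by simp
      then show ?thesis by (simp add: zero_less_mult_iff)
    qed
    moreover have "cp T > 0"
    proof -
      have "0 < cp T * exp ((k6+k7) * T)" using i2 init(2) by simp
      then show ?thesis by (simp add: zero_less_mult_iff)
    qed
    moreover have "cpp T > 0"
    proof -
      have "0 < cpp T * exp (k8 * T)" using i3 init(3) by simp
      then show ?thesis by (simp add: zero_less_mult_iff)
    qed
    moreover have "xs T > 0"
    proof -
      have "0 < xs T * exp (k1 * T)" using i4 init(4) by simp
      then show ?thesis by (simp add: zero_less_mult_iff)
    qed
    moreover have "z T > 0"
    proof -
      have "0 < z T * exp (\<mu> * T)" using i5 init(5) by simp
      then show ?thesis by (simp add: zero_less_mult_iff)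
    qed
    ultimately show ?thesis unfolding g_def by simp
  qed
  have gpos: "g t > 0" if "t \<ge> 0" for t
    using first_cross[OF cg g0 gstep that] by blast
  have cpos: "c t > 0" and cppos: "cp t > 0" and cpppos: "cpp t > 0" and xspos: "xs t > 0"
     and zpos: "z t > 0" if "t \<ge> 0" for t
    using gpos[OF that] unfolding g_def by auto
  have Dpos: "D t > 0" if "t \<ge> 0" for t
    using cpppos[OF that] zpos[OF that] kp unfolding D_def by (simp add: add_pos_pos)
  have mD: "m t * D t = k1 * xs t + \<mu> * z t" if "t \<ge> 0" for t
    using Dpos[OF that] m_def[of t] unfolding D_def by (simp add: field_simps)
  have Mc: "xs t + z t = M" if "t \<ge> 0" for t
  proof -
    have "\<exists>C. \<forall>x\<in>{0::real..}. xs x + z x = C"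
    proof (rule has_field_derivative_zero_constant)
      fix x :: real assume "x \<in> {0..}"
      then have x: "x \<ge> 0" by simp
      have "((\<lambda>t. xs t + z t) has_real_derivative
          ((k2 * cpp x * m x - k1 * xs x) + (z x * (\<theta> * m x - \<mu>)))) (at x within {0..})"
        by (intro DERIV_add ode_xs ode_z x)
      moreover have "(k2 * cpp x * m x - k1 * xs x) + (z x * (\<theta> * m x - \<mu>)) = m x * D x - (k1 * xs x + \<mu> * z x)"
        unfolding D_def by (simp add: algebra_simps)
      ultimately show "((\<lambda>t. xs t + z t) has_real_derivative 0) (at x within {0..})" using mD[OF x] by simp
    qed simp
    then obtain C where C: "\<forall>x\<in>{0::real..}. xs x + z x = C" by blast
    then show ?thesis using that M_def by auto
  qed
  define S where "S = k6 * k8 + k5 * k8 + k5 * k7"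
  have Sp: "S > 0" unfolding S_def using kp by (simp add: add_pos_pos)
  define c1 where "c1 = k6 * k8 * L / S"
  define p1 where "p1 = k5 * k8 * L / S"
  define b1 where "b1 = k5 * k7 * L / S"
  have den: "k6\<^sup>2 * k8\<^sup>2 + k5 * k6 * k8\<^sup>2 + k5 * k6 * k7 * k8 = (k6 * k8) * S"
    unfolding S_def by (simp add: algebra_simps power2_eq_square)
  have cbar_eq: "cbar = b1"
    unfolding cbar_def b1_def den using kp Sp by (simp add: field_simps)
  have sum1: "c1 + p1 + b1 = L"
  proof -
    have "c1 + p1 + b1 = (k6 * k8 * L + k5 * k8 * L + k5 * k7 * L) / S"
      unfolding c1_def p1_def b1_def by (simp add: add_divide_distrib)
    also have "k6 * k8 * L + k5 * k8 * L + k5 * k7 * L = L * S" unfolding S_def by (simp add: algebra_simps)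
    finally show ?thesis using Sp by simp
  qed
  have eq1: "k6 * p1 = k5 * c1" unfolding c1_def p1_def by simp
  have eq2: "k7 * p1 = k8 * b1" unfolding b1_def p1_def by simp
  define e1 where "e1 t = c t - c1" for t
  define e2 where "e2 t = cp t - p1" for t
  define e3 where "e3 t = cpp t - b1" for t
  define W where "W t = k5 * k7 * (e1 t)\<^sup>2 + k6 * k7 * (e2 t)\<^sup>2 + k6 * k8 * (e3 t)\<^sup>2" for t
  define W' where "W' t = 2 * k5 * k7 * e1 t * (k6 * cp t - k5 * c t)
     + 2 * k6 * k7 * e2 t * (k5 * c t + k8 * cpp t - (k6 + k7) * cp t)
     + 2 * k6 * k8 * e3 t * (k7 * cp t - k8 * cpp t)" for t
  define lam where "lam = min k5 k8"
  have lamp: "lam > 0" "lam \<le> k5" "lam \<le> k8" unfolding lam_def using kp by auto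
  have Wder: "(W has_real_derivative W' t) (at t within {0..})" if t: "t \<ge> 0" for t
  proof -
    have d1: "(e1 has_real_derivative (k6 * cp t - k5 * c t)) (at t within {0..})"
      unfolding e1_def[abs_def] using DERIV_diff[OF ode_c[OF t] DERIV_const[of c1]] by simp
    have d2: "(e2 has_real_derivative (k5 * c t + k8 * cpp t - (k6 + k7) * cp t)) (at t within {0..})"
      unfolding e2_def[abs_def] using DERIV_diff[OF ode_cp[OF t] DERIV_const[of p1]] by simp
    have d3: "(e3 has_real_derivative (k7 * cp t - k8 * cpp t)) (at t within {0..})"
      unfolding e3_def[abs_def] using DERIV_diff[OF ode_cpp[OF t] DERIV_const[of b1]] by simp
    have s1: "((\<lambda>x. k5 * k7 * (e1 x)\<^sup>2) has_real_derivative k5 * k7 * (2 * e1 t * (k6 * cp t - k5 * c t))) (at t within {0..})"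
      using DERIV_cmult[OF DERIV_power[OF d1, of 2], of "k5 * k7"] by (simp add: ac_simps)
    have s2: "((\<lambda>x. k6 * k7 * (e2 x)\<^sup>2) has_real_derivative k6 * k7 * (2 * e2 t * (k5 * c t + k8 * cpp t - (k6 + k7) * cp t))) (at t within {0..})"
      using DERIV_cmult[OF DERIV_power[OF d2, of 2], of "k6 * k7"] by (simp add: ac_simps)
    have s3: "((\<lambda>x. k6 * k8 * (e3 x)\<^sup>2) has_real_derivative k6 * k8 * (2 * e3 t * (k7 * cp t - k8 * cpp t))) (at t within {0..})"
      using DERIV_cmult[OF DERIV_power[OF d3, of 2], of "k6 * k8"] by (simp add: ac_simps)
    have "(W has_real_derivative (k5 * k7 * (2 * e1 t * (k6 * cp t - k5 * c t)) +
       k6 * k7 * (2 * e2 t * (k5 * c t + k8 * cpp t - (k6 + k7) * cp t)) +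
       k6 * k8 * (2 * e3 t * (k7 * cp t - k8 * cpp t)))) (at t within {0..})"
      unfolding W_def[abs_def] by (intro DERIV_add s1 s2 s3)
    moreover have "k5 * k7 * (2 * e1 t * (k6 * cp t - k5 * c t)) +
       k6 * k7 * (2 * e2 t * (k5 * c t + k8 * cpp t - (k6 + k7) * cp t)) +
       k6 * k8 * (2 * e3 t * (k7 * cp t - k8 * cpp t)) = W' t"
      unfolding W'_def by (simp add: algebra_simps)
    ultimately show ?thesis by simp
  qed
  have Wineq: "W' t + 2 * lam * W t \<le> 0" if t: "t \<ge> 0" for t
  proof -
    have es: "e1 t = - e2 t - e3 t" using Lc[OF t] sum1 unfolding e1_def e2_def e3_def by simp
    define A where "A = k5 * e1 t - k6 * e2 t"
    define B where "B = k7 * e2 t - k8 * e3 t"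
    have W'eq: "W' t = - 2 * (k7 * A\<^sup>2 + k6 * B\<^sup>2)"
    proof -
      have a: "k6 * cp t - k5 * c t = - A" unfolding A_def e1_def e2_def using eq1 by (simp add: algebra_simps)
      have b: "k7 * cp t - k8 * cpp t = B" unfolding B_def e3_def e2_def using eq2 by (simp add: algebra_simps)
      have c: "k5 * c t + k8 * cpp t - (k6 + k7) * cp t = A - B" using a b by (simp add: algebra_simps)
      show ?thesis unfolding W'_def a b c unfolding A_def B_def by (simp add: algebra_simps power2_eq_square)
    qed
    have id: "k5 * k8 * W t = k7 * k8 * A\<^sup>2 + k5 * k6 * B\<^sup>2 - k6 * k7 * S * (e2 t)\<^sup>2"
      unfolding W_def A_def B_def S_def es by (simp add: algebra_simps power2_eq_square)
    have "k5 * k8 * W t \<le> k7 * k8 * A\<^sup>2 + k5 * k6 * B\<^sup>2"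
      using id Sp kp by (simp add: mult_nonneg_nonneg)
    then have "lam * (k5 * k8 * W t) \<le> lam * (k7 * k8 * A\<^sup>2 + k5 * k6 * B\<^sup>2)"
      using lamp by (simp add: mult_left_mono)
    also have "\<dots> \<le> k5 * k8 * (k7 * A\<^sup>2 + k6 * B\<^sup>2)"
    proof -
      have "lam * (k7 * k8 * A\<^sup>2) \<le> k5 * (k7 * k8 * A\<^sup>2)"
        using lamp kp by (intro mult_right_mono) auto
      moreover have "lam * (k5 * k6 * B\<^sup>2) \<le> k8 * (k5 * k6 * B\<^sup>2)"
        using lamp kp by (intro mult_right_mono) auto
      ultimately show ?thesis by (simp add: algebra_simps)
    qed
    finally have "k5 * k8 * (lam * W t) \<le> k5 * k8 * (k7 * A\<^sup>2 + k6 * B\<^sup>2)"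
      by (simp add: algebra_simps)
    then have "lam * W t \<le> k7 * A\<^sup>2 + k6 * B\<^sup>2" using kp by simp
    then show ?thesis using W'eq by simp
  qed
  have Wbound: "W t \<le> W 0 * exp (- (2 * lam * t))" if t: "t \<ge> 0" for t
  proof -
    have "(- W 0) * exp ((2 * lam) * 0) \<le> (- W t) * exp ((2 * lam) * t)"
    proof (rule intfac[where f' = "\<lambda>t. - W' t"])
      fix s :: real assume "s \<ge> 0"
      then show "((\<lambda>t. - W t) has_real_derivative - W' s) (at s within {0..})"
        using DERIV_minus[OF Wder] by simp
    next
      fix s :: real assume "0 < s" "s < t"
      then show "0 \<le> - W' s + 2 * lam * - W s" using Wineq[of s] by simp
    qed (use t in auto)
    then have "W t * exp (2 * lam * t) \<le> W 0" by simp
    then have "W t \<le> W 0 / exp (2 * lam * t)" by (simp add: field_simps)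
    then show ?thesis by (simp add: exp_minus field_simps)
  qed
  have e3sq: "((\<lambda>t. (e3 t)\<^sup>2) \<longlongrightarrow> 0) at_top"
  proof (rule Lim_null_comparison)
    show "\<forall>\<^sub>F t in at_top. norm ((e3 t)\<^sup>2) \<le> W 0 / (k6 * k8) * exp (- (2 * lam * t))"
      unfolding eventually_at_top_linorder
    proof (intro exI allI impI)
      fix t :: real assume t: "t \<ge> 0"
      have "k6 * k8 * (e3 t)\<^sup>2 \<le> W t" unfolding W_def using kp by (simp add: add_nonneg_nonneg)
      also have "\<dots> \<le> W 0 * exp (- (2 * lam * t))" by (rule Wbound[OF t])
      finally show "norm ((e3 t)\<^sup>2) \<le> W 0 / (k6 * k8) * exp (- (2 * lam * t))"
        using kp by (simp add: field_simps)
    qed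
    show "((\<lambda>t. W 0 / (k6 * k8) * exp (- (2 * lam * t))) \<longlongrightarrow> 0) at_top"
      using lamp(1) by real_asymp
  qed
  have "((\<lambda>t. sqrt ((e3 t)\<^sup>2)) \<longlongrightarrow> sqrt 0) at_top" by (rule tendsto_real_sqrt[OF e3sq])
  then have "((\<lambda>t. \<bar>e3 t\<bar>) \<longlongrightarrow> 0) at_top" by simp
  then have "(e3 \<longlongrightarrow> 0) at_top" by (simp add: tendsto_rabs_zero_iff)
  then have cpplim: "(cpp \<longlongrightarrow> cbar) at_top"
    unfolding e3_def cbar_eq using tendsto_add_const_iff[of "-b1" cpp b1] by simp
  define q where "q t = \<theta> * k1 * M - \<mu> * k2 * cpp t" for t
  define zs where "zs = (\<theta> * k1 * M - \<mu> * k2 * cbar) / (\<theta> * k1)"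
  have tk: "\<theta> * k1 > 0" using kp by simp
  have zsp: "zs > 0" unfolding zs_def using hyp tk by simp
  have tzs: "\<theta> * k1 * zs = \<theta> * k1 * M - \<mu> * k2 * cbar" unfolding zs_def using kp by (simp add: field_simps)
  define z' where "z' t = z t * (q t - \<theta> * k1 * z t) / D t" for t
  have zder: "(z has_real_derivative z' t) (at t within {0..})" if t: "t \<ge> 0" for t
  proof -
    have "z t * (\<theta> * m t - \<mu>) = z' t"
    proof -
      have xs: "xs t = M - z t" using Mc[OF t] by simp
      have "(\<theta> * m t - \<mu>) * D t = \<theta> * (m t * D t) - \<mu> * D t" by (simp add: algebra_simps)
      also have "\<dots> = \<theta> * (k1 * xs t + \<mu> * z t) - \<mu> * D t" by (simp only: mD[OF t])
      also have "\<dots> = q t - \<theta> * k1 * z t" unfolding xs q_def D_def by (simp add: algebra_simps)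
      finally have "\<theta> * m t - \<mu> = (q t - \<theta> * k1 * z t) / D t"
        using Dpos[OF t] by (simp add: eq_divide_eq)
      then show ?thesis unfolding z'_def by simp
    qed
    then show ?thesis using ode_z[OF t] by simp
  qed
  have zleM: "z t \<le> M" if "t \<ge> 0" for t using Mc[OF that] xspos[OF that] by simp
  have cppL: "cpp t \<le> L" if "t \<ge> 0" for t using Lc[OF that] cpos[OF that] cppos[OF that] by simp
  define d2 where "d2 = k2 * L + \<theta> * M"
  have Dle: "D t \<le> d2" if t: "t \<ge> 0" for t
  proof -
    have "k2 * cpp t \<le> k2 * L" using cppL[OF t] kp by simp
    moreover have "\<theta> * z t \<le> \<theta> * M" using zleM[OF t] kp by simp
    ultimately show ?thesis unfolding D_def d2_def by simp
  qed
  have d2p: "d2 > 0" using Dle[of 0] Dpos[of 0] by simp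
  have qlim: "(q \<longlongrightarrow> \<theta> * k1 * zs) at_top"
    unfolding q_def tzs by (intro tendsto_intros cpplim)
  show ?thesis
  proof (rule tendstoI)
    fix \<epsilon> :: real assume \<epsilon>: "\<epsilon> > 0"
    define e where "e = \<epsilon> / 2"
    have ep: "e > 0" unfolding e_def using \<epsilon> by simp
    have "\<forall>\<^sub>F t in at_top. dist (q t) (\<theta> * k1 * zs) < \<theta> * k1 * e / 2"
      using qlim tk ep by (intro tendstoD) auto
    then obtain N where N: "\<And>t. t \<ge> N \<Longrightarrow> \<bar>q t - \<theta> * k1 * zs\<bar> < \<theta> * k1 * e / 2"
      unfolding eventually_at_top_linorder dist_real_def by blast
    define t0 where "t0 = max N 0"
    have t0: "t0 \<ge> 0" "t0 \<ge> N" unfolding t0_def by auto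
    have qb: "\<bar>q t - \<theta> * k1 * zs\<bar> < \<theta> * k1 * e / 2" if "t \<ge> t0" for t
      using N t0 that by simp
    have qlo: "q t > \<theta> * k1 * zs - \<theta> * k1 * e / 2" and qhi: "q t < \<theta> * k1 * zs + \<theta> * k1 * e / 2"
      if "t \<ge> t0" for t
      using qb[OF that] unfolding abs_less_iff by linarith+
    have ex1: "\<exists>t1\<ge>t0. z t1 \<ge> zs - e"
    proof (rule ccontr)
      assume "\<not> ?thesis"
      then have below: "z t < zs - e" if "t \<ge> t0" for t using that by force
      define cc where "cc = \<theta> * k1 * e / 2 / d2"
      have ccp: "cc > 0" unfolding cc_def using tk ep d2p by simp
      have grow: "0 \<le> z' t + (- cc) * z t" if t: "t0 < t" for t
      proof -
        have tt: "t \<ge> 0" using t t0 by simp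
        have "q t - \<theta> * k1 * z t \<ge> \<theta> * k1 * e / 2"
        proof -
          have "q t > \<theta> * k1 * zs - \<theta> * k1 * e / 2" using qlo[of t] qhi[of t] t by simp
          moreover have "\<theta> * k1 * z t \<le> \<theta> * k1 * (zs - e)" using below[of t] t tk by (intro mult_left_mono) auto
          ultimately show ?thesis by (simp add: algebra_simps)
        qed
        then have "(q t - \<theta> * k1 * z t) / D t \<ge> (\<theta> * k1 * e / 2) / d2"
          using Dpos[OF tt] Dle[OF tt] tk ep
          by (meson divide_left_mono dual_order.trans frac_le less_le mult_pos_pos half_gt_zero zero_less_mult_iff)
        then have "z t * ((q t - \<theta> * k1 * z t) / D t) \<ge> z t * cc"
          unfolding cc_def using zpos[OF tt] by (intro mult_left_mono) auto
        then show ?thesis unfolding z'_def by (simp add: algebra_simps)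
      qed
      define t where "t = t0 + M / (cc * z t0) + 1"
      have tt0: "t \<ge> t0" unfolding t_def using ccp zpos[OF t0(1)] Mc[OF t0(1)] xspos[OF t0(1)]
        by (simp add: add_pos_pos less_imp_le)
      have "z t0 * exp ((- cc) * t0) \<le> z t * exp ((- cc) * t)"
        by (rule intfac[OF t0(1) tt0 zder grow]) auto
      then have "z t0 * exp (cc * (t - t0)) \<le> z t"
        by (simp add: exp_diff exp_minus field_simps)
      moreover have "1 + cc * (t - t0) \<le> exp (cc * (t - t0))" by (rule exp_ge_add_one_self)
      ultimately have "z t0 * (1 + cc * (t - t0)) \<le> z t"
        using zpos[OF t0(1)] by (meson mult_left_mono order_trans less_imp_le)
      moreover have "z t0 * (1 + cc * (t - t0)) = z t0 + M + cc * z t0"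
        unfolding t_def using ccp zpos[OF t0(1)] by (simp add: field_simps)
      moreover have "z t \<le> M" using zleM tt0 t0 by simp
      ultimately show False using mult_pos_pos[OF ccp zpos[OF t0(1)]] zpos[OF t0(1)] by linarith
    qed
    then obtain t1 where t1: "t1 \<ge> t0" "z t1 \<ge> zs - e" by blast
    have low: "z s - (zs - e) \<ge> 0" if "s \<ge> t1" for s
    proof (rule barrier[where g = "\<lambda>t. z t - (zs - e)" and g' = z'])
      show "0 \<le> t1" using t1 t0 by simp
      show "0 \<le> z t1 - (zs - e)" using t1 by simp
      show "s \<ge> t1" by fact
      fix t :: real assume "t \<ge> 0"
      show "((\<lambda>t. z t - (zs - e)) has_real_derivative z' t) (at t within {0..})"
        using DERIV_diff[OF zder[OF \<open>t \<ge> 0\<close>] DERIV_const[of "zs - e"]] by simp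
    next
      fix t :: real assume t: "t > t1" "z t - (zs - e) < 0"
      have tt: "t \<ge> 0" using t t1 t0 by simp
      have "q t > \<theta> * k1 * zs - \<theta> * k1 * e / 2" using qlo[of t] t t1 by simp
      moreover have "\<theta> * k1 * z t \<le> \<theta> * k1 * (zs - e)" using t tk by (intro mult_left_mono) auto
      moreover have "\<theta> * k1 * e > 0" using tk ep by simp
      ultimately have "q t - \<theta> * k1 * z t \<ge> 0" by (simp only: right_diff_distrib distrib_left; linarith)
      then show "0 \<le> z' t" unfolding z'_def using zpos[OF tt] Dpos[OF tt] by simp
    qed
    have ex2: "\<exists>t2\<ge>t0. z t2 \<le> zs + e"
    proof (rule ccontr)
      assume "\<not> ?thesis"
      then have above: "z t > zs + e" if "t \<ge> t0" for t using that by force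
      define cc where "cc = (zs + e) * (\<theta> * k1 * e / 2) / d2"
      have ccp: "cc > 0" unfolding cc_def using tk ep d2p zsp by simp
      have dec: "z' t \<le> - cc" if t: "t0 < t" for t
      proof -
        have tt: "t \<ge> 0" using t t0 by simp
        have neg: "q t - \<theta> * k1 * z t \<le> - (\<theta> * k1 * e / 2)"
        proof -
          have "q t < \<theta> * k1 * zs + \<theta> * k1 * e / 2" using qlo[of t] qhi[of t] t by simp
          moreover have "\<theta> * k1 * z t \<ge> \<theta> * k1 * (zs + e)" using above[of t] t tk by (intro mult_left_mono) auto
          ultimately show ?thesis by (simp add: algebra_simps)
        qed
        have "z t * (q t - \<theta> * k1 * z t) \<le> z t * (- (\<theta> * k1 * e / 2))"
          using neg zpos[OF tt] by (intro mult_left_mono) auto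
        also have "\<dots> \<le> (zs + e) * (- (\<theta> * k1 * e / 2))"
          using above[of t] t tk ep by (intro mult_right_mono_neg) auto
        finally have num: "z t * (q t - \<theta> * k1 * z t) \<le> - ((zs + e) * (\<theta> * k1 * e / 2))" by simp
        have P: "(zs + e) * (\<theta> * k1 * e / 2) > 0" using zsp ep tk by simp
        have "z' t \<le> - ((zs + e) * (\<theta> * k1 * e / 2)) / D t"
          unfolding z'_def by (rule divide_right_mono[OF num]) (use Dpos[OF tt] in simp)
        also have "\<dots> \<le> - ((zs + e) * (\<theta> * k1 * e / 2)) / d2"
          using P Dpos[OF tt] Dle[OF tt] by (simp add: frac_le)
        finally show ?thesis unfolding cc_def by simp
      qed
      define t where "t = t0 + z t0 / cc + 1"
      have tt0: "t \<ge> t0" unfolding t_def using ccp zpos[OF t0(1)] by (simp add: add_pos_pos less_imp_le)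
      have "(- z t0 - cc * t0) * exp (0 * t0) \<le> (- z t - cc * t) * exp (0 * t)"
      proof (rule intfac[where f' = "\<lambda>t. - z' t - cc"])
        fix s :: real assume s: "s \<ge> 0"
        show "((\<lambda>t. - z t - cc * t) has_real_derivative - z' s - cc) (at s within {0..})"
          using DERIV_diff[OF DERIV_minus[OF zder[OF s]] DERIV_cmult_Id[of cc]] by simp
      next
        fix s :: real assume "t0 < s" "s < t"
        then show "0 \<le> - z' s - cc + 0 * (- z s - cc * s)" using dec[of s] by simp
      qed (use t0 tt0 in auto)
      then have "z t \<le> z t0 - cc * (t - t0)" by (simp add: algebra_simps)
      also have "\<dots> = - cc" unfolding t_def using ccp by (simp add: field_simps)
      finally show False using zpos[of t] t0 tt0 ccp by simp
    qed
    then obtain t2 where t2: "t2 \<ge> t0" "z t2 \<le> zs + e" by blast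
    have up: "(zs + e) - z s \<ge> 0" if "s \<ge> t2" for s
    proof (rule barrier[where g = "\<lambda>t. (zs + e) - z t" and g' = "\<lambda>t. - z' t"])
      show "0 \<le> t2" using t2 t0 by simp
      show "0 \<le> (zs + e) - z t2" using t2 by simp
      show "s \<ge> t2" by fact
      fix t :: real assume "t \<ge> 0"
      show "((\<lambda>t. (zs + e) - z t) has_real_derivative - z' t) (at t within {0..})"
        using DERIV_diff[OF DERIV_const[of "zs + e"] zder[OF \<open>t \<ge> 0\<close>]] by simp
    next
      fix t :: real assume t: "t > t2" "(zs + e) - z t < 0"
      have tt: "t \<ge> 0" using t t2 t0 by simp
      have "q t < \<theta> * k1 * zs + \<theta> * k1 * e / 2" using qhi[of t] t t2 by simp
      moreover have "\<theta> * k1 * z t \<ge> \<theta> * k1 * (zs + e)" using t tk by (intro mult_left_mono) auto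
      moreover have "\<theta> * k1 * e > 0" using tk ep by simp
      ultimately have "q t - \<theta> * k1 * z t \<le> 0" by (simp only: right_diff_distrib distrib_left; linarith)
      then have "z' t \<le> 0" unfolding z'_def using zpos[OF tt] Dpos[OF tt]
        by (simp add: divide_nonpos_pos mult_nonneg_nonpos)
      then show "0 \<le> - z' t" by simp
    qed
    show "\<forall>\<^sub>F t in at_top. dist (z t) ((\<theta> * k1 * M - \<mu> * k2 * cbar) / (\<theta> * k1)) < \<epsilon>"
      unfolding eventually_at_top_linorder
    proof (intro exI[of _ "max t1 t2"] allI impI)
      fix s assume "s \<ge> max t1 t2"
      then have "z s \<ge> zs - e" "z s \<le> zs + e" using low[of s] up[of s] by auto
      then show "dist (z s) ((\<theta> * k1 * M - \<mu> * k2 * cbar) / (\<theta> * k1)) < \<epsilon>"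
        unfolding zs_def[symmetric] dist_real_def e_def using \<epsilon> by simp
    qed
  qed
qed
end
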